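(* Let $\tau>0$ and $a>2$. There exist constants $\gamma\in(0,1/2]$, $c>0$ and $C>0$ depending only on $a$ and $\tau$ such that the following holds. Let $\tilde\sigma^2$ be the median-of-means estimator (defined in the context) built with this $\gamma$. Then for all integers $s,d$ with $1\le s<\lfloor\gamma d\rfloor/4$, $$\inf_{P_\xi\in\mathcal P_{a,\tau}}\ \inf_{\sigma>0}\ \inf_{\theta\in\Theta_s}\mathbf P_{\theta,P_\xi,\sigma}\Big(\tfrac12\le \tfrac{\tilde\sigma^2}{\sigma^2}\le \tfrac32\Big)\ge 1-e^{-cd},$$ $$\sup_{P_\xi\in\mathcal P_{a,\tau}}\ \sup_{\sigma>0}\ \sup_{\theta\in\Theta_s}\mathbf E_{\theta,P_\xi,\sigma}|\tilde\sigma^2-\sigma^2|\le C\sigma^2,$$ and, if moreover $a>4$, $$\sup_{P_\xi\in\mathcal P_{a,\tau}}\ \sup_{\sigma>0}\ \sup_{\theta\in\Theta_s}\mathbf E_{\theta,P_\xi,\sigma}(\tilde\sigma^2-\sigma^2)^2\le C\sigma^4.$$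
   Context: Model: for an integer $d\ge1$ we observe $Y=(Y_1,\dots,Y_d)$ with $Y_i=\theta_i+\sigma\xi_i$, $i=1,\dots,d$, where $\theta=(\theta_1,\dots,\theta_d)\in\mathbb R^d$, $\sigma>0$, and $\xi_1,\dots,\xi_d$ are i.i.d. with distribution $P_\xi$ such that $\mathbf E\xi_1=0$, $\mathbf E\xi_1^2=1$. $\mathbf P_{\theta,P_\xi,\sigma}$ and $\mathbf E_{\theta,P_\xi,\sigma}$ denote the law of $Y$ and its expectation. $\|\theta\|_0$ is the number of nonzero coordinates of $\theta$ and $\Theta_s=\{\theta\in\mathbb R^d:\|\theta\|_0\le s\}$. For $\tau>0,a\ge2$, $\mathcal P_{a,\tau}$ is the set of distributions of a real random variable $\xi_1$ with $\mathbf E\xi_1=0$, $\mathbf E\xi_1^2=1$ and $\mathbf P(|\xi_1|>t)\le(\tau/t)^a$ for all $t\ge2$. Median-of-means estimator: given $\gamma\in(0,1/2]$, let $m=\lfloor\gamma d\rfloor$, partition $\{1,\dots,d\}$ into disjoint blocks $B_1,\dots,B_m$ each of cardinality at least $\lfloor d/m\rfloor$, set $\bar\sigma_i^2=|B_i|^{-1}\sum_{j\in B_i}Y_j^2$ and $\tilde\sigma^2=\mathrm{med}(\bar\sigma_1^2,\dots,\bar\sigma_m^2)$ (sample median). *)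

theory Defs
  imports "HOL-Probability.Probability"
begin

definition med :: "real list \<Rightarrow> real" where
  "med xs = (let ys = sort xs; n = length xs in
     if odd n then ys ! (n div 2) else (ys ! (n div 2 - 1) + ys ! (n div 2)) / 2)"

definition mom_partition :: "nat \<Rightarrow> nat \<Rightarrow> (nat \<Rightarrow> nat set) \<Rightarrow> bool" where
  "mom_partition d m B \<longleftrightarrow>
     (\<forall>i<m. B i \<subseteq> {0..<d} \<and> card (B i) \<ge> d div m) \<and>
     (\<forall>i<m. \<forall>j<m. i \<noteq> j \<longrightarrow> B i \<inter> B j = {}) \<and>
     (\<Union>i<m. B i) = {0..<d}"

definition mom_est :: "(nat \<Rightarrow> nat set) \<Rightarrow> nat \<Rightarrow> (nat \<Rightarrow> real) \<Rightarrow> real" where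
  "mom_est B m Y = med (map (\<lambda>i. (\<Sum>j\<in>B i. (Y j)\<^sup>2) / real (card (B i))) [0..<m])"

definition noise_class :: "real \<Rightarrow> real \<Rightarrow> real measure \<Rightarrow> bool" where
  "noise_class a \<tau> P \<longleftrightarrow>
     prob_space P \<and> sets P = sets borel \<and>
     integrable P (\<lambda>x. x) \<and> integrable P (\<lambda>x. x\<^sup>2) \<and>
     integral\<^sup>L P (\<lambda>x. x) = 0 \<and> integral\<^sup>L P (\<lambda>x. x\<^sup>2) = 1 \<and>
     (\<forall>t\<ge>2. measure P {x. \<bar>x\<bar> > t} \<le> (\<tau> / t) powr a)"

definition sparse :: "nat \<Rightarrow> nat \<Rightarrow> (nat \<Rightarrow> real) \<Rightarrow> bool" where
  "sparse d s \<theta> \<longleftrightarrow> card {i\<in>{0..<d}. \<theta> i \<noteq> 0} \<le> s"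

end

theory Submission
  imports Defs
begin


lemma sorted_count_down:
  fixes ys :: "real list"
  assumes s: "sorted ys" and r: "r < length ys"
    and down: "\<And>x y. P y \<Longrightarrow> x \<le> y \<Longrightarrow> P x"
  shows "P (ys ! r) \<longleftrightarrow> r + 1 \<le> card {i. i < length ys \<and> P (ys ! i)}"
proof
  assume h: "P (ys ! r)"
  have "{0..r} \<subseteq> {i. i < length ys \<and> P (ys ! i)}"
  proof
    fix i assume "i \<in> {0..r}"
    then have "i \<le> r" by simp
    then have "ys ! i \<le> ys ! r" using sorted_nth_mono[OF s] r by simp
    then show "i \<in> {i. i < length ys \<and> P (ys ! i)}" using h down \<open>i \<le> r\<close> r by auto
  qed
  from card_mono[OF _ this] show "r + 1 \<le> card {i. i < length ys \<and> P (ys ! i)}" by simp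
next
  assume h: "r + 1 \<le> card {i. i < length ys \<and> P (ys ! i)}"
  show "P (ys ! r)"
  proof (rule ccontr)
    assume n: "\<not> P (ys ! r)"
    have "{i. i < length ys \<and> P (ys ! i)} \<subseteq> {0..<r}"
    proof
      fix i assume i: "i \<in> {i. i < length ys \<and> P (ys ! i)}"
      show "i \<in> {0..<r}"
      proof (rule ccontr)
        assume "i \<notin> {0..<r}"
        then have "r \<le> i" by simp
        then have "ys ! r \<le> ys ! i" using sorted_nth_mono[OF s] i by simp
        then show False using i n down by auto
      qed
    qed
    from card_mono[OF _ this] have "card {i. i < length ys \<and> P (ys ! i)} \<le> r" by simp
    with h show False by simp
  qed
qed

lemma sort_count_down:
  fixes xs :: "real list"
  assumes r: "r < length xs"
    and down: "\<And>x y. P y \<Longrightarrow> x \<le> y \<Longrightarrow> P x"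
  shows "P (sort xs ! r) \<longleftrightarrow> r + 1 \<le> length (filter P xs)"
proof -
  have "length (filter P xs) = length (filter P (sort xs))"
    by (metis mset_filter mset_sort size_mset)
  also have "\<dots> = card {i. i < length (sort xs) \<and> P (sort xs ! i)}"
    by (rule length_filter_conv_card)
  finally show ?thesis using sorted_count_down[of "sort xs" r P] r down by simp
qed

lemma length_filter_map_upt:
  "length (filter P (map v [0..<m])) = card {i. i < m \<and> P (v i)}"
  by (auto simp: length_filter_conv_card intro!: arg_cong[where f=card])

lemma med_bounds:
  fixes xs :: "real list" and lo hi :: real
  assumes cnt: "2 * card {i. i < length xs \<and> (xs ! i < lo \<or> hi < xs ! i)} < length xs"
  shows "lo \<le> med xs \<and> med xs \<le> hi"
proof -
  define n where "n = length xs"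
  define ys where "ys = sort xs"
  have n0: "n > 0" using cnt unfolding n_def by linarith
  let ?B = "{i. i < n \<and> (xs ! i < lo \<or> hi < xs ! i)}"
  have fin: "finite ?B" by simp
  have lo_cnt: "length (filter (\<lambda>x. x < lo) xs) \<le> card ?B"
    unfolding length_filter_conv_card n_def[symmetric] by (rule card_mono) auto
  have hi_cnt: "length (filter (\<lambda>x. \<not> x \<le> hi) xs) \<le> card ?B"
    unfolding length_filter_conv_card n_def[symmetric] by (rule card_mono) auto
  have cB: "2 * card ?B < n" using cnt n_def by simp
  have lenc: "length (filter (\<lambda>x. x \<le> hi) xs) + length (filter (\<lambda>x. \<not> x \<le> hi) xs) = n"
    using sum_length_filter_compl n_def by blast
  have LO: "lo \<le> ys ! r" if "r < n" "length (filter (\<lambda>x. x < lo) xs) \<le> r" for r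
  proof -
    have "\<not> (ys ! r < lo)"
      using sort_count_down[of r xs "\<lambda>x. x < lo"] that ys_def n_def by auto
    then show ?thesis by simp
  qed
  have HI: "ys ! r \<le> hi" if "r < n" "r + 1 \<le> length (filter (\<lambda>x. x \<le> hi) xs)" for r
    using sort_count_down[of r xs "\<lambda>x. x \<le> hi"] that ys_def n_def by auto
  show ?thesis
  proof (cases "odd n")
    case True
    have m: "med xs = ys ! (n div 2)" using True unfolding med_def ys_def n_def Let_def by simp
    obtain h where h: "n = 2 * h + 1" using True by (metis oddE)
    have hd: "n div 2 = h" using h by simp
    have "n div 2 < n" using n0 by simp
    moreover have "length (filter (\<lambda>x. x < lo) xs) \<le> n div 2" using lo_cnt cB hd h by linarith
    moreover have "n div 2 + 1 \<le> length (filter (\<lambda>x. x \<le> hi) xs)"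
      using hi_cnt cB lenc hd h by linarith
    ultimately show ?thesis using m LO HI by auto
  next
    case False
    then obtain h where h: "n = 2 * h" by (metis evenE)
    with n0 have h0: "h > 0" by simp
    have m: "med xs = (ys ! (h - 1) + ys ! h) / 2"
      using False h unfolding med_def ys_def n_def Let_def by simp
    have l1: "lo \<le> ys ! (h - 1)" using LO[of "h - 1"] lo_cnt cB h h0 by linarith
    have l2: "ys ! h \<le> hi" using HI[of h] hi_cnt cB lenc h h0 by linarith
    have mono: "ys ! (h - 1) \<le> ys ! h" using sorted_nth_mono[of ys "h - 1" h] h h0
      by (simp add: ys_def n_def)
    show ?thesis using m l1 l2 mono by simp
  qed
qed



lemma dyadic_cover:
  fixes x l :: real
  assumes "l > 0" "l < x"
  shows "\<exists>k::nat. 2^k * l < x \<and> x \<le> 2^(k+1) * l"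
proof -
  obtain n :: nat where n: "x / l < 2 ^ n" using real_arch_pow[of 2 "x/l"] by auto
  have ex: "\<exists>n::nat. x \<le> 2^n * l" using n assms by (intro exI[of _ n]) (simp add: field_simps)
  define N where "N = (LEAST n::nat. x \<le> 2^n * l)"
  have N: "x \<le> 2^N * l" unfolding N_def by (rule LeastI_ex[OF ex])
  have "N \<noteq> 0" using N assms by (cases N) auto
  then obtain k where k: "N = k + 1" by (metis Suc_eq_plus1 not0_implies_Suc)
  have "\<not> x \<le> 2^k * l" using not_less_Least[of k "\<lambda>n. x \<le> 2^n * l"] k unfolding N_def by simp
  then show ?thesis using N k by (intro exI[of _ k]) simp
qed

lemma noise_sets: "noise_class a \<tau> P \<Longrightarrow> sets P = sets borel"
  by (simp add: noise_class_def)

lemma tail_moment: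
  fixes p :: nat
  assumes nc: "noise_class a \<tau> P" and pa: "real p < a" and l: "l \<ge> 2" and tau: "\<tau> > 0"
  shows "(\<integral>\<^sup>+x. ennreal (\<bar>x\<bar>^p * indicator {x. l < \<bar>x\<bar>} x) \<partial>P)
      \<le> ennreal (2^p * l powr (real p - a) * \<tau> powr a / (1 - 2 powr (real p - a)))"
proof -
  define r where "r = (2::real) powr (real p - a)"
  define C0 where "C0 = 2^p * l powr (real p - a) * \<tau> powr a"
  have r0: "0 < r" "r < 1" using pa unfolding r_def by (auto intro: powr_less_one)
  have C00: "C0 \<ge> 0" unfolding C0_def by simp
  have sP: "sets P = sets borel" using nc by (simp add: noise_class_def)
  have tail: "measure P {x. t < \<bar>x\<bar>} \<le> (\<tau> / t) powr a" if "t \<ge> 2" for t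
    using nc that unfolding noise_class_def by auto
  have fP: "finite_measure P" using nc unfolding noise_class_def by (auto intro: prob_space.finite_measure)
  have meas: "{x. t < \<bar>x\<bar>} \<in> sets P" for t :: real
    unfolding sP by measurable
  define f where "f = (\<lambda>(k::nat) x. ennreal ((2^(k+1) * l)^p) * indicator {x. 2^k * l < \<bar>x\<bar>} x)"
  have pw: "ennreal (\<bar>x\<bar>^p * indicator {x. l < \<bar>x\<bar>} x) \<le> (\<Sum>k. f k x)" for x
  proof (cases "l < \<bar>x\<bar>")
    case False then show ?thesis by simp
  next
    case True
    then obtain k :: nat where k: "2^k * l < \<bar>x\<bar>" "\<bar>x\<bar> \<le> 2^(k+1) * l"
      using dyadic_cover[of l "\<bar>x\<bar>"] l by auto
    have "ennreal (\<bar>x\<bar>^p * indicator {x. l < \<bar>x\<bar>} x) = ennreal (\<bar>x\<bar>^p)" using True by simp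
    also have "\<dots> \<le> f k x" unfolding f_def using k by (auto intro!: ennreal_leI power_mono)
    also have "\<dots> \<le> (\<Sum>k. f k x)"
      using sum_le_suminf[of "\<lambda>k. f k x" "{k}"] by auto
    finally show ?thesis .
  qed
  have aux: "(c*A*lp) * (ta/(Bv*la)) = c * (lp/la) * ta * (A/Bv)" if "Bv > 0" "la > 0"
    for c A lp ta Bv la :: real using that by (simp add: field_simps)
  have termk: "(2^(k+1) * l)^p * (\<tau> / (2^k * l)) powr a = C0 * r^k" for k :: nat
  proof -
    have e1: "(2^(k+1) * l)^p = 2^p * 2 powr (real k * real p) * l powr real p"
      using l by (simp add: power_mult_distrib powr_realpow[symmetric] powr_powr[symmetric] power_add
          powr_mult[symmetric] mult.commute)
    have e2: "(\<tau> / (2^k * l)) powr a = \<tau> powr a / (2 powr (real k * a) * l powr a)"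
      using l tau by (simp add: powr_divide powr_mult powr_realpow[symmetric] powr_powr)
    have e3: "r^k = 2 powr (real k * real p) / 2 powr (real k * a)"
    proof -
      have "r^k = r powr real k" using r0 by (simp add: powr_realpow)
      also have "\<dots> = 2 powr ((real p - a) * real k)" unfolding r_def by (simp add: powr_powr)
      also have "(real p - a) * real k = real k * real p - real k * a" by (simp add: algebra_simps)
      finally show ?thesis by (simp add: powr_diff)
    qed
    have e4: "l powr (real p - a) = l powr real p / l powr a" using l by (simp add: powr_diff)
    have p1: "2 powr (real k * a) > 0" "l powr a > 0" using l by auto
    have "(2^(k+1) * l)^p * (\<tau> / (2^k * l)) powr a
        = (2^p * 2 powr (real k * real p) * l powr real p) * (\<tau> powr a / (2 powr (real k * a) * l powr a))"
      by (simp only: e1 e2)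
    also have "\<dots> = 2^p * (l powr real p / l powr a) * \<tau> powr a * (2 powr (real k * real p) / 2 powr (real k * a))"
      by (rule aux[OF p1])
    also have "\<dots> = C0 * r^k" by (simp only: C0_def e3 e4)
    finally show ?thesis .
  qed
  have "(\<integral>\<^sup>+x. ennreal (\<bar>x\<bar>^p * indicator {x. l < \<bar>x\<bar>} x) \<partial>P) \<le> (\<integral>\<^sup>+x. (\<Sum>k. f k x) \<partial>P)"
    by (rule nn_integral_mono) (rule pw)
  also have "\<dots> = (\<Sum>k. \<integral>\<^sup>+x. f k x \<partial>P)"
    by (rule nn_integral_suminf) (unfold f_def, intro borel_measurable_times_ennreal borel_measurable_const borel_measurable_indicator meas)
  also have "\<dots> = (\<Sum>k. ennreal ((2^(k+1) * l)^p) * emeasure P {x. 2^k * l < \<bar>x\<bar>})"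
    unfolding f_def by (subst nn_integral_cmult_indicator) (auto simp: meas)
  also have "\<dots> \<le> (\<Sum>k. ennreal (C0 * r^k))"
  proof (intro suminf_le summableI)
    fix k :: nat
    have t2: "2^k * l \<ge> 2"
    proof -
      have "(1::real) \<le> 2^k" by simp
      then have "1 * l \<le> 2^k * l" using l by (intro mult_right_mono) auto
      then show ?thesis using l by linarith
    qed
    have "emeasure P {x. 2^k * l < \<bar>x\<bar>} = ennreal (measure P {x. 2^k * l < \<bar>x\<bar>})"
      using fP by (simp add: finite_measure.emeasure_eq_measure)
    also have "\<dots> \<le> ennreal ((\<tau> / (2^k * l)) powr a)" using tail[OF t2] by simp
    finally have "ennreal ((2^(k+1) * l)^p) * emeasure P {x. 2^k * l < \<bar>x\<bar>}
        \<le> ennreal ((2^(k+1) * l)^p) * ennreal ((\<tau> / (2^k * l)) powr a)"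
      by (rule mult_left_mono) simp
    also have "\<dots> = ennreal ((2^(k+1) * l)^p * (\<tau> / (2^k * l)) powr a)"
      by (rule ennreal_mult''[symmetric]) simp
    also have "\<dots> = ennreal (C0 * r^k)" by (simp only: termk)
    finally show "ennreal ((2^(k+1) * l)^p) * emeasure P {x. 2^k * l < \<bar>x\<bar>} \<le> ennreal (C0 * r^k)" .
  qed
  also have "\<dots> = ennreal (C0 / (1 - r))"
  proof -
    have sm: "(\<lambda>k. C0 * r^k) sums (C0 * (1 / (1 - r)))"
      using geometric_sums[of r] r0 by (intro sums_mult) auto
    have "(\<Sum>k. ennreal (C0 * r^k)) = ennreal (\<Sum>k. C0 * r^k)"
      by (rule suminf_ennreal2) (use C00 r0 sm in \<open>auto simp: sums_iff\<close>)
    also have "(\<Sum>k. C0 * r^k) = C0 / (1 - r)" using sm by (simp add: sums_iff)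
    finally show ?thesis .
  qed
  finally show ?thesis unfolding C0_def r_def .
qed



locale nset =
  fixes a \<tau> :: real and P :: "real measure" and d :: nat
  assumes nc: "noise_class a \<tau> P"
begin

abbreviation "MM \<equiv> PiM {0..<d} (\<lambda>_. P)"

lemma PP: "prob_space P" using nc by (simp add: noise_class_def)
lemma sP: "sets P = sets borel" using nc by (simp add: noise_class_def)

sublocale MM: prob_space MM
  by (rule prob_space_PiM) (rule PP)

lemma meas_P_borel: "measurable N P = measurable N borel"
  by (rule measurable_cong_sets) (auto simp: sP)

lemma meas_borel_P: "measurable P N = measurable borel N"
  by (rule measurable_cong_sets) (auto simp: sP)

lemma comp_measP: "j < d \<Longrightarrow> (\<lambda>w. w j) \<in> measurable MM P"
  using measurable_component_singleton[of j "{0..<d}" "\<lambda>_. P"] by auto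

lemma comp_meas: "j < d \<Longrightarrow> (\<lambda>w. w j) \<in> borel_measurable MM"
  by (metis comp_measP meas_P_borel)

lemma comp_distr: "j < d \<Longrightarrow> distr MM P (\<lambda>w. w j) = P"
  by (rule distr_PiM_component) (auto simp: PP)

lemma comp_nn:
  assumes "j < d" "f \<in> borel_measurable borel"
  shows "(\<integral>\<^sup>+w. f (w j) \<partial>MM) = (\<integral>\<^sup>+x. f x \<partial>P)"
proof -
  have "(\<integral>\<^sup>+x. f x \<partial>P) = (\<integral>\<^sup>+x. f x \<partial>distr MM P (\<lambda>w. w j))" using comp_distr assms by simp
  also have "\<dots> = (\<integral>\<^sup>+w. f (w j) \<partial>MM)"
    by (rule nn_integral_distr) (use assms comp_measP meas_borel_P in auto)
  finally show ?thesis by simp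
qed

lemma comp_int:
  fixes f :: "real \<Rightarrow> real"
  assumes "j < d" "f \<in> borel_measurable borel"
  shows "(\<integral>w. f (w j) \<partial>MM) = (\<integral>x. f x \<partial>P)"
proof -
  have "(\<integral>x. f x \<partial>P) = (\<integral>x. f x \<partial>distr MM P (\<lambda>w. w j))" using comp_distr assms by simp
  also have "\<dots> = (\<integral>w. f (w j) \<partial>MM)"
    by (rule integral_distr) (use assms comp_measP meas_borel_P in auto)
  finally show ?thesis by simp
qed

lemma comp_integrable:
  fixes f :: "real \<Rightarrow> real"
  assumes "j < d" "f \<in> borel_measurable borel" "integrable P f"
  shows "integrable MM (\<lambda>w. f (w j))"
proof -
  have "integrable (distr MM P (\<lambda>w. w j)) f" using comp_distr assms by simp
  then show ?thesis
    by (subst (asm) integrable_distr_eq) (use assms comp_measP meas_borel_P in auto)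
qed

lemma comp_indepP: assumes d0: "d > 0" shows "MM.indep_vars (\<lambda>_. P) (\<lambda>j w. w j) {0..<d}"
proof -
  from d0 have ne: "{0..<d} \<noteq> {}" by simp
  show ?thesis
  proof (subst MM.indep_vars_iff_distr_eq_PiM'[OF ne])
    show "(\<lambda>w. w i) \<in> measurable MM P" if "i \<in> {0..<d}" for i using that comp_measP by simp
    have "distr MM (\<Pi>\<^sub>M i\<in>{0..<d}. P) (\<lambda>x. \<lambda>i\<in>{0..<d}. x i) = distr MM MM (\<lambda>x. x)"
      by (intro distr_cong) (auto simp: space_PiM PiE_def extensional_def fun_eq_iff)
    also have "\<dots> = MM" by simp
    also have "\<dots> = (\<Pi>\<^sub>M i\<in>{0..<d}. distr MM P (\<lambda>w. w i))"
      by (intro PiM_cong) (auto simp: comp_distr)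
    finally show "distr MM (\<Pi>\<^sub>M i\<in>{0..<d}. P) (\<lambda>x. \<lambda>i\<in>{0..<d}. x i) = (\<Pi>\<^sub>M i\<in>{0..<d}. distr MM P (\<lambda>w. w i))" .
  qed
qed

lemma comp_indep: assumes "d > 0" shows "MM.indep_vars (\<lambda>_. borel) (\<lambda>j w. w j) {0..<d}"
proof -
  have "(\<lambda>x. x) \<in> borel_measurable P" by (simp add: meas_borel_P)
  then show ?thesis using MM.indep_vars_compose2[OF comp_indepP[OF assms], of "\<lambda>_ x. x" "\<lambda>_. borel"] by blast
qed

end


lemma exp8: "exp (-8::real) \<le> 1/32"
proof -
  have "(3::real) \<le> exp 2" using exp_ge_add_one_self[of 2] by simp
  then have "3^4 \<le> (exp (2::real))^4" by (intro power_mono) auto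
  also have "(exp (2::real))^4 = exp 8" by (simp add: exp_of_nat_mult[symmetric] flip: exp_add)
  finally have "32 \<le> exp (8::real)" by simp
  then show ?thesis by (simp add: exp_minus field_simps)
qed

context nset begin

lemma block_bad:
  assumes d0: "d > 0" and S: "S \<subseteq> {0..<d}" "S \<noteq> {}" and l: "l \<ge> 2"
    and eps: "(\<integral>x. x\<^sup>2 - min (x\<^sup>2) (l\<^sup>2) \<partial>P) \<le> 1/64"
    and kbig: "real (card S) \<ge> 64 * l^4"
  shows "MM.prob {w \<in> space MM. \<not> (1/2 \<le> (\<Sum>j\<in>S. (w j)\<^sup>2) / card S \<and> (\<Sum>j\<in>S. (w j)\<^sup>2) / card S \<le> 3/2)} \<le> 1/8"
proof -
  define L where "L = l\<^sup>2"
  define k where "k = real (card S)"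
  have finS: "finite S" using S finite_subset by auto
  have k0: "k > 0" unfolding k_def using finS S by (simp add: card_gt_0_iff)
  have L0: "L > 0" unfolding L_def using l by simp
  have kL: "k \<ge> 64 * L\<^sup>2" using kbig unfolding k_def L_def by (simp add: power_mult[symmetric])
  have cm[measurable]: "(\<lambda>w. w j) \<in> borel_measurable MM" if "j \<in> S" for j
    using comp_meas S that by auto
  have intx2: "integrable P (\<lambda>x. x\<^sup>2)" using nc by (simp add: noise_class_def)
  have Ex2: "(\<integral>x. x\<^sup>2 \<partial>P) = 1" using nc by (simp add: noise_class_def)
  have meas_min: "(\<lambda>x::real. min (x\<^sup>2) L) \<in> borel_measurable borel" by measurable
  have intmin: "integrable P (\<lambda>x. min (x\<^sup>2) L)"
  proof (rule Bochner_Integration.integrable_bound[OF intx2])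
    show "(\<lambda>x. min (x\<^sup>2) L) \<in> borel_measurable P" by (subst meas_borel_P) (rule meas_min)
    show "AE x in P. norm (min (x\<^sup>2) L) \<le> norm (x\<^sup>2)" using L0 by auto
  qed
  define mu where "mu = (\<integral>x. min (x\<^sup>2) L \<partial>P)"
  have mu1: "mu \<le> 1" unfolding mu_def Ex2[symmetric]
    by (intro integral_mono intmin intx2) auto
  have "(\<integral>x. x\<^sup>2 - min (x\<^sup>2) L \<partial>P) = 1 - mu" unfolding mu_def Ex2[symmetric]
    by (rule Bochner_Integration.integral_diff[OF intx2 intmin])
  then have mu2: "mu \<ge> 1 - 1/64" using eps unfolding L_def by simp
  define Z where "Z = (\<lambda>(j::nat) (w::nat \<Rightarrow> real). min ((w j)\<^sup>2) L)"
  have EZ: "MM.expectation (Z j) = mu" if "j \<in> S" for j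
    unfolding Z_def mu_def by (rule comp_int) (use that S meas_min in auto)
  have indZ: "MM.indep_vars (\<lambda>_. borel) Z S"
  proof -
    have "MM.indep_vars (\<lambda>_. borel) (\<lambda>j w. (\<lambda>x. min (x\<^sup>2) L) (w j)) S"
      by (rule MM.indep_vars_compose2[OF MM.indep_vars_subset[OF comp_indep[OF d0] S(1)]]) (use meas_min in auto)
    then show ?thesis unfolding Z_def .
  qed
  interpret H: Hoeffding_ineq MM S Z "\<lambda>_. 0" "\<lambda>_. L" "\<Sum>i\<in>S. MM.expectation (Z i)"
  proof unfold_locales
    show "finite S" by (rule finS)
    show "MM.indep_vars (\<lambda>_. borel) Z S" by (rule indZ)
    show "AE x in MM. Z i x \<in> {0..L}" for i unfolding Z_def using L0 by auto
  qed simp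
  have muS: "(\<Sum>i\<in>S. MM.expectation (Z i)) = k * mu" unfolding k_def using EZ by simp
  have sumL: "(\<Sum>i\<in>S. (L - 0)\<^sup>2) = k * L\<^sup>2" unfolding k_def by simp
  have ex_le: "exp (- 2 * (k/4)\<^sup>2 / (k * L\<^sup>2)) \<le> 1/32"
  proof -
    have "- 2 * (k/4)\<^sup>2 / (k * L\<^sup>2) = - k / (8 * L\<^sup>2)" using k0 L0 by (simp add: field_simps power2_eq_square)
    also have "\<dots> \<le> -8" using kL L0 by (simp add: field_simps)
    finally show ?thesis using exp8 by (meson exp_le_cancel_iff order_trans)
  qed
  define E1 where "E1 = {w \<in> space MM. (\<Sum>i\<in>S. Z i w) \<le> k * mu - k/4}"
  define E2 where "E2 = {w \<in> space MM. (\<Sum>i\<in>S. Z i w) \<ge> k * mu + k/4}"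
  define E3 where "E3 = {w \<in> space MM. (\<Sum>i\<in>S. (w i)\<^sup>2 - Z i w) \<ge> k/4}"
  have p1: "MM.prob E1 \<le> 1/32"
    using H.Hoeffding_ineq_le[of "k/4"] k0 L0 ex_le unfolding E1_def muS sumL by (simp add: power2_eq_square)
  have p2: "MM.prob E2 \<le> 1/32"
    using H.Hoeffding_ineq_ge[of "k/4"] k0 L0 ex_le unfolding E2_def muS sumL by (simp add: power2_eq_square)
  have p3: "MM.prob E3 \<le> 1/16"
  proof -
    have intj: "integrable MM (\<lambda>w. (w i)\<^sup>2 - Z i w)" if "i \<in> S" for i
      unfolding Z_def
      by (rule comp_integrable[where f="\<lambda>x. x\<^sup>2 - min (x\<^sup>2) L"])
         (use that S intx2 intmin in auto)
    have intj2: "(\<integral>w. (w i)\<^sup>2 - Z i w \<partial>MM) \<le> 1/64" if "i \<in> S" for i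
    proof -
      have "(\<integral>w. (w i)\<^sup>2 - Z i w \<partial>MM) = (\<integral>x. x\<^sup>2 - min (x\<^sup>2) L \<partial>P)"
        unfolding Z_def by (rule comp_int) (use that S in auto)
      then show ?thesis using eps unfolding L_def by simp
    qed
    have "MM.prob E3 \<le> (\<integral>w. (\<Sum>i\<in>S. (w i)\<^sup>2 - Z i w) \<partial>MM) / (k/4)"
      unfolding E3_def
      by (rule integral_Markov_inequality_measure[where A="space MM"])
         (use intj k0 in \<open>auto simp: Z_def intro!: AE_I2 sum_nonneg\<close>)
    also have "(\<integral>w. (\<Sum>i\<in>S. (w i)\<^sup>2 - Z i w) \<partial>MM) = (\<Sum>i\<in>S. \<integral>w. (w i)\<^sup>2 - Z i w \<partial>MM)"
      by (rule Bochner_Integration.integral_sum) (use intj in auto)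
    also have "\<dots> \<le> (\<Sum>i\<in>S. 1/64)" by (rule sum_mono) (use intj2 in auto)
    also have "\<dots> = k / 64" unfolding k_def by simp
    finally show ?thesis using k0 by (simp add: field_simps)
  qed
  have sub: "{w \<in> space MM. \<not> (1/2 \<le> (\<Sum>j\<in>S. (w j)\<^sup>2) / card S \<and> (\<Sum>j\<in>S. (w j)\<^sup>2) / card S \<le> 3/2)}
      \<subseteq> E1 \<union> E2 \<union> E3"
  proof
    fix w assume w: "w \<in> {w \<in> space MM. \<not> (1/2 \<le> (\<Sum>j\<in>S. (w j)\<^sup>2) / card S \<and> (\<Sum>j\<in>S. (w j)\<^sup>2) / card S \<le> 3/2)}"
    have sp: "w \<in> space MM" using w by simp
    have ZS: "(\<Sum>i\<in>S. Z i w) \<le> (\<Sum>j\<in>S. (w j)\<^sup>2)" unfolding Z_def by (rule sum_mono) auto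
    have split: "(\<Sum>j\<in>S. (w j)\<^sup>2) = (\<Sum>i\<in>S. Z i w) + (\<Sum>i\<in>S. (w i)\<^sup>2 - Z i w)"
      by (simp add: sum_subtractf)
    have "(\<Sum>j\<in>S. (w j)\<^sup>2) < k/2 \<or> (\<Sum>j\<in>S. (w j)\<^sup>2) > 3*k/2"
      using w k0 unfolding k_def[symmetric] by (auto simp: field_simps)
    then show "w \<in> E1 \<union> E2 \<union> E3"
    proof
      assume "(\<Sum>j\<in>S. (w j)\<^sup>2) < k/2"
      moreover have "k * mu \<ge> k * (63/64)" using mu2 k0 by (intro mult_left_mono) auto
      ultimately have "w \<in> E1" unfolding E1_def using sp ZS k0 by (simp; linarith)
      then show ?thesis by simp
    next
      assume h: "(\<Sum>j\<in>S. (w j)\<^sup>2) > 3*k/2"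
      show ?thesis
      proof (cases "(\<Sum>i\<in>S. Z i w) \<ge> k * mu + k/4")
        case True then show ?thesis unfolding E2_def using sp by simp
      next
        case False
        moreover have "k * mu \<le> k * 1" using mu1 k0 by (intro mult_left_mono) auto
        ultimately have "(\<Sum>i\<in>S. (w i)\<^sup>2 - Z i w) \<ge> k/4" using h split k0
          by linarith
        then show ?thesis unfolding E3_def using sp by simp
      qed
    qed
  qed
  have mE: "E1 \<in> MM.events" "E2 \<in> MM.events" "E3 \<in> MM.events"
    unfolding E1_def E2_def E3_def Z_def by measurable
  have "MM.prob {w \<in> space MM. \<not> (1/2 \<le> (\<Sum>j\<in>S. (w j)\<^sup>2) / card S \<and> (\<Sum>j\<in>S. (w j)\<^sup>2) / card S \<le> 3/2)}
      \<le> MM.prob (E1 \<union> E2 \<union> E3)"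
    by (rule MM.finite_measure_mono[OF sub]) (use mE in auto)
  also have "\<dots> \<le> MM.prob E1 + MM.prob E2 + MM.prob E3"
  proof -
    have "MM.prob (E1 \<union> E2 \<union> E3) \<le> MM.prob (E1 \<union> E2) + MM.prob E3"
      using mE by (intro measure_Un_le) auto
    also have "MM.prob (E1 \<union> E2) \<le> MM.prob E1 + MM.prob E2"
      using mE by (intro measure_Un_le) auto
    finally show ?thesis by simp
  qed
  finally show ?thesis using p1 p2 p3 by simp
qed

end


lemma contam_card:
  assumes part: "mom_partition d m B" and sp: "sparse d s \<theta>"
  shows "card {i. i < m \<and> \<not> (\<forall>j\<in>B i. \<theta> j = 0)} \<le> s"
proof -
  let ?C = "{i. i < m \<and> \<not> (\<forall>j\<in>B i. \<theta> j = 0)}"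
  let ?N = "{i\<in>{0..<d}. \<theta> i \<noteq> 0}"
  define f where "f i = (SOME j. j \<in> B i \<and> \<theta> j \<noteq> 0)" for i
  have fi: "f i \<in> B i \<and> \<theta> (f i) \<noteq> 0" if "i \<in> ?C" for i
  proof -
    have "\<exists>j. j \<in> B i \<and> \<theta> j \<noteq> 0" using that by auto
    then show ?thesis unfolding f_def by (rule someI_ex)
  qed
  have sub: "B i \<subseteq> {0..<d}" if "i < m" for i using part that unfolding mom_partition_def by auto
  have disj: "B i \<inter> B i' = {}" if "i < m" "i' < m" "i \<noteq> i'" for i i'
    using part that unfolding mom_partition_def by auto
  have "inj_on f ?C"
  proof (rule inj_onI)
    fix i i' assume h: "i \<in> ?C" "i' \<in> ?C" "f i = f i'"
    show "i = i'"
    proof (rule ccontr)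
      assume "i \<noteq> i'"
      then have "B i \<inter> B i' = {}" using disj h by auto
      then show False using fi[OF h(1)] fi[OF h(2)] h(3) by auto
    qed
  qed
  moreover have "f ` ?C \<subseteq> ?N" using fi sub by fastforce
  ultimately have "card ?C \<le> card ?N" by (intro card_inj_on_le) auto
  also have "\<dots> \<le> s" using sp unfolding sparse_def by simp
  finally show ?thesis .
qed



lemma sort_nth_meas:
  fixes v :: "nat \<Rightarrow> 'a \<Rightarrow> real"
  assumes v: "\<And>i. i < m \<Longrightarrow> v i \<in> borel_measurable N" and r: "r < m"
  shows "(\<lambda>x. sort (map (\<lambda>i. v i x) [0..<m]) ! r) \<in> borel_measurable N"
proof (rule borel_measurableI_le)
  fix y
  have eq: "{x \<in> space N. sort (map (\<lambda>i. v i x) [0..<m]) ! r \<le> y}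
      = {x \<in> space N. real (r + 1) \<le> (\<Sum>i<m. if v i x \<le> y then 1 else 0)}"
  proof -
    have F1: "sort (map (\<lambda>i. v i x) [0..<m]) ! r \<le> y \<longleftrightarrow> r + 1 \<le> card {i. i < m \<and> v i x \<le> y}" for x
      using sort_count_down[of r "map (\<lambda>i. v i x) [0..<m]" "\<lambda>z. z \<le> y"] r
        length_filter_map_upt[of "\<lambda>z. z \<le> y" "\<lambda>i. v i x" m] by simp
    have F2: "real (card {i. i < m \<and> v i x \<le> y}) = (\<Sum>i<m. if v i x \<le> y then 1 else 0)" for x
    proof -
      have "{i. i < m \<and> v i x \<le> y} = {..<m} \<inter> {i. v i x \<le> y}" by auto
      then show ?thesis by (simp add: sum.If_cases)
    qed
    have "sort (map (\<lambda>i. v i x) [0..<m]) ! r \<le> y \<longleftrightarrow> real (r + 1) \<le> (\<Sum>i<m. if v i x \<le> y then 1 else 0)" for x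
      unfolding F1 F2[symmetric] of_nat_le_iff ..
    then show ?thesis by auto
  qed
  have "(\<lambda>x. (\<Sum>i<m. if v i x \<le> y then 1 else 0 :: real)) \<in> borel_measurable N"
    by (intro borel_measurable_sum) (use v in measurable)
  then show "{x \<in> space N. sort (map (\<lambda>i. v i x) [0..<m]) ! r \<le> y} \<in> sets N"
    unfolding eq by measurable
qed

lemma med_meas:
  fixes v :: "nat \<Rightarrow> 'a \<Rightarrow> real"
  assumes v: "\<And>i. i < m \<Longrightarrow> v i \<in> borel_measurable N" and m: "m > 0"
  shows "(\<lambda>x. med (map (\<lambda>i. v i x) [0..<m])) \<in> borel_measurable N"
proof -
  have a: "(\<lambda>x. sort (map (\<lambda>i. v i x) [0..<m]) ! (m div 2)) \<in> borel_measurable N"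
    using m by (intro sort_nth_meas v) auto
  have b: "(\<lambda>x. sort (map (\<lambda>i. v i x) [0..<m]) ! (m div 2 - 1)) \<in> borel_measurable N"
    using m by (intro sort_nth_meas v) auto
  have eq: "(\<lambda>x. med (map (\<lambda>i. v i x) [0..<m])) = (\<lambda>x. if odd m then sort (map (\<lambda>i. v i x) [0..<m]) ! (m div 2)
     else (sort (map (\<lambda>i. v i x) [0..<m]) ! (m div 2 - 1) + sort (map (\<lambda>i. v i x) [0..<m]) ! (m div 2)) / 2)"
    by (simp add: med_def Let_def fun_eq_iff)
  show ?thesis unfolding eq using a b by measurable
qed



lemma med_nonneg:
  assumes "\<And>x. x \<in> set xs \<Longrightarrow> x \<ge> 0" "xs \<noteq> []"
  shows "med xs \<ge> 0"
proof -
  have nn: "sort xs ! r \<ge> 0" if "r < length xs" for r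
  proof -
    have "sort xs ! r \<in> set xs" using that by (metis length_sort nth_mem set_sort)
    then show ?thesis using assms(1) by auto
  qed
  have l: "length xs > 0" using assms(2) by simp
  have h1: "sort xs ! (length xs div 2) \<ge> 0" by (rule nn) (use l in simp)
  have h2: "sort xs ! (length xs div 2 - 1) \<ge> 0" by (rule nn) (use l in presburger)
  show ?thesis using h1 h2 unfolding med_def Let_def by simp
qed

lemma med_le_clean:
  fixes v :: "nat \<Rightarrow> real"
  assumes nn: "\<And>i. i < m \<Longrightarrow> v i \<ge> 0" and Ic: "Ic \<subseteq> {..<m}"
    and cnt: "4 * (m - card Ic) < m"
  shows "med (map v [0..<m]) \<le> 4 / m * (\<Sum>i\<in>Ic. v i)"
proof -
  define xs where "xs = map v [0..<m]"
  define ys where "ys = sort xs"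
  define r where "r = m div 2"
  have m0: "m > 0" using cnt by simp
  have lx: "length xs = m" unfolding xs_def by simp
  have rm: "r < m" unfolding r_def using m0 by simp
  define t where "t = ys ! r"
  have "t \<in> set xs" unfolding t_def ys_def using rm lx by (metis length_sort nth_mem set_sort)
  then have t0: "t \<ge> 0" using nn unfolding xs_def by auto
  have medt: "med xs \<le> t"
  proof (cases "odd m")
    case True then show ?thesis unfolding med_def t_def ys_def r_def Let_def lx by simp
  next
    case False
    have "ys ! (r - 1) \<le> ys ! r" unfolding ys_def
      using rm lx by (intro sorted_nth_mono) auto
    then show ?thesis using False unfolding med_def t_def ys_def r_def Let_def lx by simp
  qed
  have "\<not> (ys ! r < t)" unfolding t_def by simp
  then have "\<not> (r + 1 \<le> length (filter (\<lambda>x. x < t) xs))"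
    using sort_count_down[of r xs "\<lambda>x. x < t"] rm lx unfolding ys_def by auto
  then have lt: "card {i. i < m \<and> v i < t} \<le> r"
    unfolding xs_def length_filter_map_upt by simp
  have "card {i. i < m \<and> v i < t} + card {i. i < m \<and> \<not> v i < t} = m"
  proof -
    have "card {i. i < m \<and> v i < t} + card {i. i < m \<and> \<not> v i < t} = card ({i. i < m \<and> v i < t} \<union> {i. i < m \<and> \<not> v i < t})"
      by (rule card_Un_disjoint[symmetric]) auto
    also have "{i. i < m \<and> v i < t} \<union> {i. i < m \<and> \<not> v i < t} = {..<m}" by auto
    finally show ?thesis by simp
  qed
  then have ge: "card {i. i < m \<and> t \<le> v i} \<ge> m - r" using lt by (simp add: not_less)
  have "{i. i < m \<and> t \<le> v i} \<subseteq> {i\<in>Ic. t \<le> v i} \<union> ({..<m} - Ic)" by auto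
  then have "card {i. i < m \<and> t \<le> v i} \<le> card ({i\<in>Ic. t \<le> v i} \<union> ({..<m} - Ic))"
    using Ic by (intro card_mono) (auto intro: finite_subset)
  also have "\<dots> \<le> card {i\<in>Ic. t \<le> v i} + card ({..<m} - Ic)" by (rule card_Un_le)
  finally have "card {i. i < m \<and> t \<le> v i} \<le> card {i\<in>Ic. t \<le> v i} + card ({..<m} - Ic)" .
  moreover have "card ({..<m} - Ic) = m - card Ic" using Ic by (simp add: card_Diff_subset finite_subset)
  ultimately have cI: "card {i\<in>Ic. t \<le> v i} \<ge> m - r - (m - card Ic)" using ge by linarith
  have "4 * card {i\<in>Ic. t \<le> v i} \<ge> m" using cI cnt rm unfolding r_def by linarith
  then have c4: "real m / 4 \<le> real (card {i\<in>Ic. t \<le> v i})" by linarith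
  have finIc: "finite Ic" using Ic finite_subset by auto
  have "t * (real m / 4) \<le> t * real (card {i\<in>Ic. t \<le> v i})" using t0 c4 by (intro mult_left_mono) auto
  also have "\<dots> = (\<Sum>i\<in>{i\<in>Ic. t \<le> v i}. t)" by simp
  also have "\<dots> \<le> (\<Sum>i\<in>{i\<in>Ic. t \<le> v i}. v i)" by (rule sum_mono) auto
  also have "\<dots> \<le> (\<Sum>i\<in>Ic. v i)" using finIc nn Ic by (intro sum_mono2) auto
  finally have "t \<le> 4 / m * (\<Sum>i\<in>Ic. v i)" using m0 by (simp add: field_simps)
  then show ?thesis using medt unfolding xs_def by simp
qed



context nset begin

lemma part_facts:
  assumes part: "mom_partition d m B" and i: "i < m"
  shows "B i \<subseteq> {0..<d}" "card (B i) \<ge> d div m" "finite (B i)"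
  using part i unfolding mom_partition_def by (auto intro: finite_subset)

lemma prob_part:
  fixes m s :: nat and B :: "nat \<Rightarrow> nat set" and \<theta> :: "nat \<Rightarrow> real" and \<sigma> l :: real
  assumes d0: "d > 0" and part: "mom_partition d m B" and sp: "sparse d s \<theta>" and sm: "4 * s < m"
    and sig: "\<sigma> > 0" and l: "l \<ge> 2" and eps: "(\<integral>x. x\<^sup>2 - min (x\<^sup>2) (l\<^sup>2) \<partial>P) \<le> 1/64"
    and kbig: "real (d div m) \<ge> 64 * l^4"
  shows "MM.prob {\<xi> \<in> space MM. 1/2 \<le> mom_est B m (\<lambda>j. \<theta> j + \<sigma> * \<xi> j) / \<sigma>\<^sup>2 \<and>
            mom_est B m (\<lambda>j. \<theta> j + \<sigma> * \<xi> j) / \<sigma>\<^sup>2 \<le> 3/2} \<ge> 1 - exp (- real m / 32)"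
proof -
  have m0: "m > 0" using sm by simp
  have l4: "l^4 \<ge> 1" using l by (simp add: one_le_power)
  have Bsub: "B i \<subseteq> {0..<d}" and Bfin: "finite (B i)" and Bcard: "card (B i) \<ge> d div m" if "i < m" for i
    using part_facts[OF part that] by auto
  have Bcard': "real (card (B i)) \<ge> 64 * l^4" if "i < m" for i
    using Bcard[OF that] kbig by (meson of_nat_le_iff order_trans)
  have Bne: "B i \<noteq> {}" if "i < m" for i
  proof
    assume "B i = {}"
    then show False using Bcard'[OF that] l4 by simp
  qed
  define Ic where "Ic = {i. i < m \<and> (\<forall>j\<in>B i. \<theta> j = 0)}"
  define Cc where "Cc = {i. i < m \<and> \<not> (\<forall>j\<in>B i. \<theta> j = 0)}"
  have Cs: "card Cc \<le> s" unfolding Cc_def by (rule contam_card[OF part sp])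
  have IC: "card Ic + card Cc = m"
  proof -
    have "card Ic + card Cc = card (Ic \<union> Cc)" unfolding Ic_def Cc_def
      by (rule card_Un_disjoint[symmetric]) auto
    also have "Ic \<union> Cc = {..<m}" unfolding Ic_def Cc_def by auto
    finally show ?thesis by simp
  qed
  have Icsub: "Ic \<subseteq> {..<m}" unfolding Ic_def by auto
  have finIc: "finite Ic" using Icsub finite_subset by auto
  have Icm: "i < m" if "i \<in> Ic" for i using that Icsub by auto
  have cIc: "card Ic > 0" using IC Cs sm by linarith
  have cIcm: "card Ic \<le> m" using IC by linarith
  define mean where "mean i \<xi> = (\<Sum>j\<in>B i. (\<xi> j)\<^sup>2) / real (card (B i))" for i and \<xi> :: "nat \<Rightarrow> real"
  define bad where "bad i \<xi> \<longleftrightarrow> \<not> (1/2 \<le> mean i \<xi> \<and> mean i \<xi> \<le> 3/2)" for i \<xi>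
  define W where "W i \<xi> = (if bad i \<xi> then 1 else 0 :: real)" for i \<xi>
  have cm: "(\<lambda>w. w j) \<in> borel_measurable MM" if "j \<in> B i" "i < m" for i j
    using Bsub[OF that(2)] that(1) by (intro comp_meas) auto
  have mean_meas: "mean i \<in> borel_measurable MM" if "i < m" for i
    unfolding mean_def using cm[OF _ that] by measurable
  have bad_sets: "{\<xi> \<in> space MM. bad i \<xi>} \<in> MM.events" if "i < m" for i
    unfolding bad_def using mean_meas[OF that] by measurable
  have pbad: "MM.prob {\<xi> \<in> space MM. bad i \<xi>} \<le> 1/8" if "i \<in> Ic" for i
  proof -
    have im: "i < m" using that Icsub by auto
    show ?thesis unfolding bad_def mean_def
      by (rule block_bad[OF d0 Bsub[OF im] Bne[OF im] l eps Bcard'[OF im]])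
  qed
  have EW: "MM.expectation (W i) = MM.prob {\<xi> \<in> space MM. bad i \<xi>}" if "i < m" for i
  proof -
    have "MM.expectation (W i) = MM.expectation (indicator {\<xi> \<in> space MM. bad i \<xi>})"
      by (rule Bochner_Integration.integral_cong) (auto simp: W_def)
    also have "\<dots> = MM.prob {\<xi> \<in> space MM. bad i \<xi>}"
      using bad_sets[OF that] by (simp add: MM.emeasure_eq_measure)
    finally show ?thesis .
  qed
  have indW: "MM.indep_vars (\<lambda>_. borel) W Ic"
  proof -
    have r: "MM.indep_vars (\<lambda>j. PiM (B j) (\<lambda>_. borel)) (\<lambda>j \<omega>. restrict (\<lambda>i. \<omega> i) (B j)) Ic"
    proof (rule MM.indep_vars_restrict[OF comp_indep[OF d0]])
      show "B j \<subseteq> {0..<d}" if "j \<in> Ic" for j using that Bsub Icsub by auto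
      show "disjoint_family_on B Ic" using part Icsub unfolding mom_partition_def disjoint_family_on_def
        by (metis lessThan_iff subset_iff)
    qed
    define Y where "Y j y = (if \<not> (1/2 \<le> (\<Sum>i\<in>B j. (y i)\<^sup>2) / real (card (B j)) \<and>
        (\<Sum>i\<in>B j. (y i)\<^sup>2) / real (card (B j)) \<le> 3/2) then 1 else 0 :: real)" for j and y :: "nat \<Rightarrow> real"
    have Ym: "Y j \<in> borel_measurable (PiM (B j) (\<lambda>_. borel))" for j
    proof -
      have "(\<lambda>y::nat\<Rightarrow>real. (\<Sum>i\<in>B j. (y i)\<^sup>2)) \<in> borel_measurable (PiM (B j) (\<lambda>_. borel))"
      proof (rule borel_measurable_sum[where f="\<lambda>i y. (y i)\<^sup>2"])
        fix i assume "i \<in> B j"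
        then have "(\<lambda>y::nat\<Rightarrow>real. y i) \<in> borel_measurable (PiM (B j) (\<lambda>_. borel))"
          by (rule measurable_component_singleton)
        then show "(\<lambda>y::nat\<Rightarrow>real. (y i)\<^sup>2) \<in> borel_measurable (PiM (B j) (\<lambda>_. borel))" by measurable
      qed
      then show ?thesis unfolding Y_def by measurable
    qed
    have "MM.indep_vars (\<lambda>_. borel) (\<lambda>j \<omega>. Y j (restrict (\<lambda>i. \<omega> i) (B j))) Ic"
      by (rule MM.indep_vars_compose2[OF r]) (rule Ym)
    moreover have "(\<lambda>j \<omega>. Y j (restrict (\<lambda>i. \<omega> i) (B j))) = W"
      unfolding Y_def W_def bad_def mean_def by (intro ext) (simp cong: sum.cong)
    ultimately show ?thesis by simp
  qed
  interpret H: Hoeffding_ineq MM Ic W "\<lambda>_. 0" "\<lambda>_. 1" "\<Sum>i\<in>Ic. MM.expectation (W i)"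
  proof unfold_locales
    show "finite Ic" by (rule finIc)
    show "MM.indep_vars (\<lambda>_. borel) W Ic" by (rule indW)
    show "AE x in MM. W i x \<in> {0..1}" for i unfolding W_def by auto
  qed simp
  have mu: "(\<Sum>i\<in>Ic. MM.expectation (W i)) \<le> real m / 8"
  proof -
    have "(\<Sum>i\<in>Ic. MM.expectation (W i)) \<le> (\<Sum>i\<in>Ic. 1/8)"
      by (rule sum_mono) (use EW pbad Icsub in auto)
    also have "\<dots> = real (card Ic) / 8" by simp
    also have "\<dots> \<le> real m / 8" using cIcm by simp
    finally show ?thesis .
  qed
  define E where "E = {\<xi> \<in> space MM. (\<Sum>i\<in>Ic. W i \<xi>) \<ge> real m / 4}"
  have Ep: "MM.prob E \<le> exp (- real m / 32)"
  proof -
    have "E \<subseteq> {\<xi> \<in> space MM. (\<Sum>i\<in>Ic. W i \<xi>) \<ge> (\<Sum>i\<in>Ic. MM.expectation (W i)) + real m / 8}"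
      unfolding E_def using mu by auto
    moreover have "{\<xi> \<in> space MM. (\<Sum>i\<in>Ic. W i \<xi>) \<ge> (\<Sum>i\<in>Ic. MM.expectation (W i)) + real m / 8} \<in> MM.events"
      using bad_sets Icm unfolding W_def by measurable
    ultimately have "MM.prob E \<le> MM.prob {\<xi> \<in> space MM. (\<Sum>i\<in>Ic. W i \<xi>) \<ge> (\<Sum>i\<in>Ic. MM.expectation (W i)) + real m / 8}"
      by (intro MM.finite_measure_mono)
    also have "\<dots> \<le> exp (-2 * (real m / 8)\<^sup>2 / (\<Sum>i\<in>Ic. (1 - 0)\<^sup>2))"
      by (rule H.Hoeffding_ineq_ge) (use cIc in auto)
    also have "\<dots> \<le> exp (- real m / 32)"
    proof -
      have "(\<Sum>i\<in>Ic. (1 - 0 :: real)\<^sup>2) = real (card Ic)" by simp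
      moreover have "-2 * (real m / 8)\<^sup>2 / real (card Ic) \<le> - real m / 32"
      proof -
        have r1: "real m / real (card Ic) \<ge> 1" using cIcm cIc by (simp add: field_simps)
        have e: "-2 * (real m / 8)\<^sup>2 / real (card Ic) = - (real m / 32) * (real m / real (card Ic))"
          by (simp add: field_simps power2_eq_square)
        have "(real m / 32) * 1 \<le> (real m / 32) * (real m / real (card Ic))"
          using r1 by (intro mult_left_mono) auto
        then show ?thesis unfolding e by linarith
      qed
      ultimately show ?thesis by simp
    qed
    finally show ?thesis .
  qed
  define est where "est \<xi> = mom_est B m (\<lambda>j. \<theta> j + \<sigma> * \<xi> j)" for \<xi>
  define v where "v i \<xi> = (\<Sum>j\<in>B i. (\<theta> j + \<sigma> * \<xi> j)\<^sup>2) / real (card (B i))" for i \<xi>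
  have est_v: "est \<xi> = med (map (\<lambda>i. v i \<xi>) [0..<m])" for \<xi>
    unfolding est_def v_def mom_est_def by simp
  have vm: "v i \<in> borel_measurable MM" if "i < m" for i
    unfolding v_def using cm[OF _ that] by measurable
  have est_meas: "est \<in> borel_measurable MM"
    unfolding est_v[abs_def] by (rule med_meas[OF vm m0])
  have v_clean: "v i \<xi> = \<sigma>\<^sup>2 * mean i \<xi>" if "i \<in> Ic" for i \<xi>
  proof -
    have "(\<Sum>j\<in>B i. (\<theta> j + \<sigma> * \<xi> j)\<^sup>2) = (\<Sum>j\<in>B i. \<sigma>\<^sup>2 * (\<xi> j)\<^sup>2)"
      using that unfolding Ic_def by (intro sum.cong) (auto simp: power_mult_distrib)
    then show ?thesis unfolding v_def mean_def by (simp add: sum_distrib_left)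
  qed
  define T where "T = {\<xi> \<in> space MM. 1/2 \<le> est \<xi> / \<sigma>\<^sup>2 \<and> est \<xi> / \<sigma>\<^sup>2 \<le> 3/2}"
  have Tm: "T \<in> MM.events" unfolding T_def using est_meas by measurable
  have sub: "space MM - E \<subseteq> T"
  proof
    fix \<xi> assume x: "\<xi> \<in> space MM - E"
    then have sumW: "(\<Sum>i\<in>Ic. W i \<xi>) < real m / 4" unfolding E_def by auto
    have "(\<Sum>i\<in>Ic. W i \<xi>) = real (card {i\<in>Ic. bad i \<xi>})"
    proof -
      have "(\<Sum>i\<in>Ic. W i \<xi>) = (\<Sum>i\<in>{i\<in>Ic. bad i \<xi>}. 1)"
        unfolding W_def using finIc by (simp add: sum.If_cases Int_def conj_commute)
      then show ?thesis by simp
    qed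
    with sumW have cb: "4 * card {i\<in>Ic. bad i \<xi>} < m" by linarith
    let ?xs = "map (\<lambda>i. v i \<xi>) [0..<m]"
    have "{i. i < length ?xs \<and> (?xs ! i < \<sigma>\<^sup>2/2 \<or> 3/2*\<sigma>\<^sup>2 < ?xs ! i)} \<subseteq> Cc \<union> {i\<in>Ic. bad i \<xi>}"
    proof
      fix i assume i: "i \<in> {i. i < length ?xs \<and> (?xs ! i < \<sigma>\<^sup>2/2 \<or> 3/2*\<sigma>\<^sup>2 < ?xs ! i)}"
      then have im: "i < m" and vi: "v i \<xi> < \<sigma>\<^sup>2/2 \<or> 3/2*\<sigma>\<^sup>2 < v i \<xi>" by auto
      show "i \<in> Cc \<union> {i\<in>Ic. bad i \<xi>}"
      proof (cases "i \<in> Ic")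
        case True
        have s2: "\<sigma>\<^sup>2 > 0" using sig by simp
        from vi have "\<sigma>\<^sup>2 * mean i \<xi> < \<sigma>\<^sup>2 * (1/2) \<or> \<sigma>\<^sup>2 * (3/2) < \<sigma>\<^sup>2 * mean i \<xi>"
          using v_clean[OF True] by (simp add: mult.commute)
        then have "mean i \<xi> < 1/2 \<or> 3/2 < mean i \<xi>" using s2 by (meson mult_less_cancel_left_pos)
        then show ?thesis using True unfolding bad_def by auto
      next
        case False then show ?thesis using im unfolding Ic_def Cc_def by auto
      qed
    qed
    then have "card {i. i < length ?xs \<and> (?xs ! i < \<sigma>\<^sup>2/2 \<or> 3/2*\<sigma>\<^sup>2 < ?xs ! i)} \<le> card (Cc \<union> {i\<in>Ic. bad i \<xi>})"
      using finIc by (intro card_mono) (auto simp: Cc_def)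
    also have "\<dots> \<le> card Cc + card {i\<in>Ic. bad i \<xi>}" by (rule card_Un_le)
    finally have "2 * card {i. i < length ?xs \<and> (?xs ! i < \<sigma>\<^sup>2/2 \<or> 3/2*\<sigma>\<^sup>2 < ?xs ! i)} < length ?xs"
      using cb Cs sm by simp
    then have mb: "\<sigma>\<^sup>2/2 \<le> est \<xi> \<and> est \<xi> \<le> 3/2*\<sigma>\<^sup>2" unfolding est_v by (rule med_bounds)
    have s2: "\<sigma>\<^sup>2 > 0" using sig by simp
    show "\<xi> \<in> T" unfolding T_def using x mb s2 by (auto simp: field_simps)
  qed
  have Em: "E \<in> MM.events" unfolding E_def using bad_sets Icm unfolding W_def by measurable
  have "1 - exp (- real m / 32) \<le> 1 - MM.prob E" using Ep by simp
  also have "\<dots> = MM.prob (space MM - E)" using Em by (simp add: MM.prob_compl)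
  also have "\<dots> \<le> MM.prob T" using sub Tm by (intro MM.finite_measure_mono)
  finally show ?thesis unfolding T_def est_def .
qed

end


lemma cs_sum: "(\<Sum>i\<in>I. f i)\<^sup>2 \<le> real (card I) * (\<Sum>i\<in>I. (f i)\<^sup>2)"
  for f :: "'a \<Rightarrow> real"
  using Cauchy_Schwarz_ineq_sum[of "\<lambda>_. 1" f I] by simp

context nset begin

lemma exp_part:
  fixes m s :: nat and B :: "nat \<Rightarrow> nat set" and \<theta> :: "nat \<Rightarrow> real" and \<sigma> K4 :: real
  assumes d0: "d > 0" and part: "mom_partition d m B" and sp: "sparse d s \<theta>" and sm: "4 * s < m"
    and sig: "\<sigma> > 0" and Bne: "\<And>i. i < m \<Longrightarrow> B i \<noteq> {}"
  shows "(\<integral>\<^sup>+ \<xi>. ennreal \<bar>mom_est B m (\<lambda>j. \<theta> j + \<sigma> * \<xi> j) - \<sigma>\<^sup>2\<bar> \<partial>MM) \<le> ennreal (5 * \<sigma>\<^sup>2)"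
    and "integrable P (\<lambda>x. x^4) \<Longrightarrow> (\<integral>x. x^4 \<partial>P) \<le> K4 \<Longrightarrow>
      (\<integral>\<^sup>+ \<xi>. ennreal ((mom_est B m (\<lambda>j. \<theta> j + \<sigma> * \<xi> j) - \<sigma>\<^sup>2)\<^sup>2) \<partial>MM) \<le> ennreal ((16 * K4 + 1) * \<sigma>^4)"
proof -
  have m0: "m > 0" using sm by simp
  have Bsub: "B i \<subseteq> {0..<d}" and Bfin: "finite (B i)" if "i < m" for i
    using part_facts[OF part that] by auto
  have Bc: "real (card (B i)) > 0" if "i < m" for i using Bfin[OF that] Bne[OF that] by (simp add: card_gt_0_iff)
  define Ic where "Ic = {i. i < m \<and> (\<forall>j\<in>B i. \<theta> j = 0)}"
  define Cc where "Cc = {i. i < m \<and> \<not> (\<forall>j\<in>B i. \<theta> j = 0)}"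
  have Cs: "card Cc \<le> s" unfolding Cc_def by (rule contam_card[OF part sp])
  have IC: "card Ic + card Cc = m"
  proof -
    have "card Ic + card Cc = card (Ic \<union> Cc)" unfolding Ic_def Cc_def
      by (rule card_Un_disjoint[symmetric]) auto
    also have "Ic \<union> Cc = {..<m}" unfolding Ic_def Cc_def by auto
    finally show ?thesis by simp
  qed
  have Icsub: "Ic \<subseteq> {..<m}" unfolding Ic_def by auto
  have finIc: "finite Ic" using Icsub finite_subset by auto
  have Icm: "i < m" if "i \<in> Ic" for i using that Icsub by auto
  have cIcm: "card Ic \<le> m" using IC by linarith
  have cnt: "4 * (m - card Ic) < m" using IC Cs sm by linarith
  define est where "est \<xi> = mom_est B m (\<lambda>j. \<theta> j + \<sigma> * \<xi> j)" for \<xi>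
  define v where "v i \<xi> = (\<Sum>j\<in>B i. (\<theta> j + \<sigma> * \<xi> j)\<^sup>2) / real (card (B i))" for i \<xi>
  have est_v: "est \<xi> = med (map (\<lambda>i. v i \<xi>) [0..<m])" for \<xi>
    unfolding est_def v_def mom_est_def by simp
  have v0: "v i \<xi> \<ge> 0" for i \<xi> unfolding v_def by (intro divide_nonneg_nonneg sum_nonneg) auto
  have est0: "est \<xi> \<ge> 0" for \<xi> unfolding est_v by (rule med_nonneg) (use v0 m0 in auto)
  have est_le: "est \<xi> \<le> 4 / m * (\<Sum>i\<in>Ic. v i \<xi>)" for \<xi>
    unfolding est_v by (rule med_le_clean[OF _ Icsub cnt]) (rule v0)
  define q where "q i \<xi> = (\<Sum>j\<in>B i. (\<xi> j)\<^sup>2) / real (card (B i))" for i and \<xi> :: "nat \<Rightarrow> real"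
  have v_clean: "v i \<xi> = \<sigma>\<^sup>2 * q i \<xi>" if "i \<in> Ic" for i \<xi>
  proof -
    have "(\<Sum>j\<in>B i. (\<theta> j + \<sigma> * \<xi> j)\<^sup>2) = (\<Sum>j\<in>B i. \<sigma>\<^sup>2 * (\<xi> j)\<^sup>2)"
      using that unfolding Ic_def by (intro sum.cong) (auto simp: power_mult_distrib)
    then show ?thesis unfolding v_def q_def by (simp add: sum_distrib_left)
  qed
  have intx2: "integrable P (\<lambda>x. x\<^sup>2)" using nc by (simp add: noise_class_def)
  have Ex2: "(\<integral>x. x\<^sup>2 \<partial>P) = 1" using nc by (simp add: noise_class_def)
  have int_comp2: "integrable MM (\<lambda>\<xi>. (\<xi> j)\<^sup>2)" if "j < d" for j
    by (rule comp_integrable[where f="\<lambda>x. x\<^sup>2"]) (use that intx2 in auto)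
  have E_comp2: "(\<integral>\<xi>. (\<xi> j)\<^sup>2 \<partial>MM) = 1" if "j < d" for j
    using comp_int[of j "\<lambda>x. x\<^sup>2"] that Ex2 by simp
  have jd: "j < d" if "j \<in> B i" "i \<in> Ic" for i j using that(1) Bsub[OF Icm[OF that(2)]] by auto
  have int_q: "integrable MM (q i)" if "i \<in> Ic" for i
    unfolding q_def using int_comp2 jd[OF _ that] by (intro integrable_divide Bochner_Integration.integrable_sum) auto
  have E_q: "(\<integral>\<xi>. q i \<xi> \<partial>MM) = 1" if "i \<in> Ic" for i
  proof -
    have "(\<integral>\<xi>. q i \<xi> \<partial>MM) = (\<Sum>j\<in>B i. \<integral>\<xi>. (\<xi> j)\<^sup>2 \<partial>MM) / real (card (B i))"
      unfolding q_def using that by (simp add: int_comp2 jd)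
    also have "\<dots> = 1" using E_comp2 jd[OF _ that] Bc[OF Icm[OF that]] by simp
    finally show ?thesis .
  qed
  define g2 where "g2 \<xi> = 4 / m * (\<Sum>i\<in>Ic. \<sigma>\<^sup>2 * q i \<xi>) + \<sigma>\<^sup>2" for \<xi>
  have int_g2: "integrable MM g2" unfolding g2_def using int_q by auto
  have E_g2: "(\<integral>\<xi>. g2 \<xi> \<partial>MM) = 4 / m * (card Ic * \<sigma>\<^sup>2) + \<sigma>\<^sup>2"
  proof -
    have "(\<integral>\<xi>. g2 \<xi> \<partial>MM) = 4 / m * (\<Sum>i\<in>Ic. \<sigma>\<^sup>2 * (\<integral>\<xi>. q i \<xi> \<partial>MM)) + \<sigma>\<^sup>2"
      unfolding g2_def using int_q by (simp add: Bochner_Integration.integral_sum MM.prob_space)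
    then show ?thesis using E_q by simp
  qed
  have g2_le: "4 / m * (card Ic * \<sigma>\<^sup>2) + \<sigma>\<^sup>2 \<le> 5 * \<sigma>\<^sup>2"
  proof -
    have "4 / m * (card Ic * \<sigma>\<^sup>2) \<le> 4 / m * (m * \<sigma>\<^sup>2)"
      using cIcm m0 by (intro mult_left_mono mult_right_mono) auto
    then show ?thesis using m0 by simp
  qed
  have q0: "q i \<xi> \<ge> 0" for i \<xi> unfolding q_def by (intro divide_nonneg_nonneg sum_nonneg) auto
  show "(\<integral>\<^sup>+ \<xi>. ennreal \<bar>mom_est B m (\<lambda>j. \<theta> j + \<sigma> * \<xi> j) - \<sigma>\<^sup>2\<bar> \<partial>MM) \<le> ennreal (5 * \<sigma>\<^sup>2)"
  proof -
    have "(\<integral>\<^sup>+ \<xi>. ennreal \<bar>mom_est B m (\<lambda>j. \<theta> j + \<sigma> * \<xi> j) - \<sigma>\<^sup>2\<bar> \<partial>MM) \<le> (\<integral>\<^sup>+ \<xi>. ennreal (g2 \<xi>) \<partial>MM)"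
    proof (rule nn_integral_mono)
      fix \<xi>
      have "\<bar>est \<xi> - \<sigma>\<^sup>2\<bar> \<le> est \<xi> + \<sigma>\<^sup>2"
        using est0[of \<xi>] zero_le_power2[of \<sigma>] by (simp add: abs_le_iff del: zero_le_power2)
      also have "\<dots> \<le> g2 \<xi>" using est_le[of \<xi>] v_clean unfolding g2_def by simp
      finally show "ennreal \<bar>mom_est B m (\<lambda>j. \<theta> j + \<sigma> * \<xi> j) - \<sigma>\<^sup>2\<bar> \<le> ennreal (g2 \<xi>)"
        unfolding est_def by (rule ennreal_leI)
    qed
    also have "\<dots> = ennreal (\<integral>\<xi>. g2 \<xi> \<partial>MM)"
    proof (rule nn_integral_eq_integral[OF int_g2])
      have "g2 \<xi> \<ge> 0" for \<xi> unfolding g2_def using q0 m0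
        by (intro add_nonneg_nonneg mult_nonneg_nonneg sum_nonneg) auto
      then show "AE x in MM. 0 \<le> g2 x" by simp
    qed
    also have "\<dots> \<le> ennreal (5 * \<sigma>\<^sup>2)" using E_g2 g2_le by (intro ennreal_leI) simp
    finally show ?thesis .
  qed
  assume int4: "integrable P (\<lambda>x. x^4)" and K4: "(\<integral>x. x^4 \<partial>P) \<le> K4"
  have int_comp4: "integrable MM (\<lambda>\<xi>. (\<xi> j)^4)" if "j < d" for j
    by (rule comp_integrable[where f="\<lambda>x. x^4"]) (use that int4 in auto)
  have E_comp4: "(\<integral>\<xi>. (\<xi> j)^4 \<partial>MM) \<le> K4" if "j < d" for j
    using comp_int[of j "\<lambda>x. x^4"] that K4 by simp
  define q4 where "q4 i \<xi> = (\<Sum>j\<in>B i. (\<xi> j)^4) / real (card (B i))" for i and \<xi> :: "nat \<Rightarrow> real"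
  have int_q4: "integrable MM (q4 i)" if "i \<in> Ic" for i
    unfolding q4_def using int_comp4 jd[OF _ that] by (intro integrable_divide Bochner_Integration.integrable_sum) auto
  have E_q4: "(\<integral>\<xi>. q4 i \<xi> \<partial>MM) \<le> K4" if "i \<in> Ic" for i
  proof -
    have "(\<integral>\<xi>. q4 i \<xi> \<partial>MM) = (\<Sum>j\<in>B i. \<integral>\<xi>. (\<xi> j)^4 \<partial>MM) / real (card (B i))"
      unfolding q4_def using that by (simp add: int_comp4 jd)
    also have "\<dots> \<le> (\<Sum>j\<in>B i. K4) / real (card (B i))"
      using Bc[OF Icm[OF that]] by (intro divide_right_mono sum_mono E_comp4 jd[OF _ that]) auto
    also have "\<dots> = K4" using Bc[OF Icm[OF that]] by simp
    finally show ?thesis .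
  qed
  have q4_ge: "(q i \<xi>)\<^sup>2 \<le> q4 i \<xi>" if "i \<in> Ic" for i \<xi>
  proof -
    have c: "real (card (B i)) > 0" using Bc[OF Icm[OF that]] .
    have "(\<Sum>j\<in>B i. (\<xi> j)\<^sup>2)\<^sup>2 \<le> real (card (B i)) * (\<Sum>j\<in>B i. ((\<xi> j)\<^sup>2)\<^sup>2)" by (rule cs_sum)
    then have "(\<Sum>j\<in>B i. (\<xi> j)\<^sup>2)\<^sup>2 / (real (card (B i)))\<^sup>2 \<le> real (card (B i)) * (\<Sum>j\<in>B i. (\<xi> j)^4) / (real (card (B i)))\<^sup>2"
      using c by (intro divide_right_mono) (auto simp: power_mult[symmetric])
    then show ?thesis unfolding q_def q4_def using c by (simp add: power_divide power2_eq_square)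
  qed
  define g3 where "g3 \<xi> = 16 / m * (\<Sum>i\<in>Ic. \<sigma>^4 * q4 i \<xi>) + \<sigma>^4" for \<xi>
  have int_g3: "integrable MM g3" unfolding g3_def using int_q4 by auto
  have E_g3: "(\<integral>\<xi>. g3 \<xi> \<partial>MM) \<le> (16 * K4 + 1) * \<sigma>^4"
  proof -
    have "(\<integral>\<xi>. g3 \<xi> \<partial>MM) = 16 / m * (\<Sum>i\<in>Ic. \<sigma>^4 * (\<integral>\<xi>. q4 i \<xi> \<partial>MM)) + \<sigma>^4"
      unfolding g3_def using int_q4 by (simp add: Bochner_Integration.integral_sum MM.prob_space)
    also have "\<dots> \<le> 16 / m * (\<Sum>i\<in>Ic. \<sigma>^4 * K4) + \<sigma>^4"
      using E_q4 m0 by (intro add_right_mono mult_left_mono sum_mono) auto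
    also have "\<dots> = 16 / m * card Ic * \<sigma>^4 * K4 + \<sigma>^4" by simp
    also have "\<dots> \<le> 16 * K4 * \<sigma>^4 + \<sigma>^4"
    proof -
      have K40: "K4 \<ge> 0"
      proof -
        have "0 \<le> (\<integral>x. x^4 \<partial>P)" by (rule integral_nonneg_AE) (auto simp: zero_le_even_power)
        then show ?thesis using K4 by linarith
      qed
      have "16 / m * card Ic \<le> 16" using cIcm m0 by (simp add: field_simps)
      then have "16 / m * card Ic * (\<sigma>^4 * K4) \<le> 16 * (\<sigma>^4 * K4)"
        using K40 by (intro mult_right_mono) auto
      then show ?thesis by (simp add: algebra_simps)
    qed
    also have "\<dots> = (16 * K4 + 1) * \<sigma>^4" by (simp add: algebra_simps)
    finally show ?thesis .
  qed
  have q40: "q4 i \<xi> \<ge> 0" for i \<xi> unfolding q4_def by (intro divide_nonneg_nonneg sum_nonneg) auto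
  show "(\<integral>\<^sup>+ \<xi>. ennreal ((mom_est B m (\<lambda>j. \<theta> j + \<sigma> * \<xi> j) - \<sigma>\<^sup>2)\<^sup>2) \<partial>MM) \<le> ennreal ((16 * K4 + 1) * \<sigma>^4)"
  proof -
    have "(\<integral>\<^sup>+ \<xi>. ennreal ((mom_est B m (\<lambda>j. \<theta> j + \<sigma> * \<xi> j) - \<sigma>\<^sup>2)\<^sup>2) \<partial>MM) \<le> (\<integral>\<^sup>+ \<xi>. ennreal (g3 \<xi>) \<partial>MM)"
    proof (rule nn_integral_mono)
      fix \<xi>
      have e0: "est \<xi> \<ge> 0" by (rule est0)
      have "(est \<xi> - \<sigma>\<^sup>2)\<^sup>2 \<le> (est \<xi>)\<^sup>2 + \<sigma>^4"
      proof -
        have "(est \<xi> - \<sigma>\<^sup>2)\<^sup>2 = (est \<xi>)\<^sup>2 + (\<sigma>\<^sup>2)\<^sup>2 - 2 * est \<xi> * \<sigma>\<^sup>2" by (rule power2_diff)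
        moreover have "(\<sigma>\<^sup>2)\<^sup>2 = \<sigma>^4" by (simp flip: power_mult)
        moreover have "est \<xi> * \<sigma>\<^sup>2 \<ge> 0" using e0 by simp
        ultimately show ?thesis by linarith
      qed
      also have "(est \<xi>)\<^sup>2 \<le> (4 / m * (\<Sum>i\<in>Ic. v i \<xi>))\<^sup>2"
        using est_le[of \<xi>] e0 by (intro power_mono) auto
      also have "(4 / m * (\<Sum>i\<in>Ic. v i \<xi>))\<^sup>2 = 16 / m^2 * (\<Sum>i\<in>Ic. v i \<xi>)\<^sup>2"
        by (simp add: power_mult_distrib power_divide)
      also have "\<dots> \<le> 16 / m^2 * (real (card Ic) * (\<Sum>i\<in>Ic. (v i \<xi>)\<^sup>2))"
        by (intro mult_left_mono cs_sum) auto
      also have "\<dots> \<le> 16 / m^2 * (real m * (\<Sum>i\<in>Ic. (v i \<xi>)\<^sup>2))"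
        using cIcm by (intro mult_left_mono mult_right_mono sum_nonneg) auto
      also have "\<dots> = 16 / m * (\<Sum>i\<in>Ic. (v i \<xi>)\<^sup>2)" using m0 by (simp add: power2_eq_square)
      also have "\<dots> \<le> 16 / m * (\<Sum>i\<in>Ic. \<sigma>^4 * q4 i \<xi>)"
      proof (intro mult_left_mono sum_mono)
        fix i assume i: "i \<in> Ic"
        have "(v i \<xi>)\<^sup>2 = \<sigma>^4 * (q i \<xi>)\<^sup>2" using v_clean[OF i] by (simp add: power_mult_distrib)
        also have "\<dots> \<le> \<sigma>^4 * q4 i \<xi>" using q4_ge[OF i] by (intro mult_left_mono) auto
        finally show "(v i \<xi>)\<^sup>2 \<le> \<sigma>^4 * q4 i \<xi>" .
      qed auto
      finally have "(est \<xi> - \<sigma>\<^sup>2)\<^sup>2 \<le> g3 \<xi>" unfolding g3_def by simp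
      then show "ennreal ((mom_est B m (\<lambda>j. \<theta> j + \<sigma> * \<xi> j) - \<sigma>\<^sup>2)\<^sup>2) \<le> ennreal (g3 \<xi>)"
        unfolding est_def by (rule ennreal_leI)
    qed
    also have "\<dots> = ennreal (\<integral>\<xi>. g3 \<xi> \<partial>MM)"
    proof (rule nn_integral_eq_integral[OF int_g3])
      have "g3 \<xi> \<ge> 0" for \<xi> unfolding g3_def using q40 m0
        by (intro add_nonneg_nonneg mult_nonneg_nonneg sum_nonneg) (auto simp: zero_le_even_power)
      then show "AE x in MM. 0 \<le> g3 x" by simp
    qed
    also have "\<dots> \<le> ennreal ((16 * K4 + 1) * \<sigma>^4)" using E_g3 by (intro ennreal_leI)
    finally show ?thesis .
  qed
qed

end


lemma eps_bound:
  assumes nc: "noise_class a \<tau> P" and a: "a > 2" and tau: "\<tau> > 0" and l: "l \<ge> 2"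
    and small: "2^2 * l powr (real 2 - a) * \<tau> powr a / (1 - 2 powr (real 2 - a)) \<le> 1/64"
  shows "(\<integral>x. x\<^sup>2 - min (x\<^sup>2) (l\<^sup>2) \<partial>P) \<le> 1/64"
proof -
  have sP: "sets P = sets borel" using nc by (simp add: noise_class_def)
  have mb: "measurable P N = measurable borel N" for N by (rule measurable_cong_sets) (auto simp: sP)
  have intx2: "integrable P (\<lambda>x. x\<^sup>2)" using nc by (simp add: noise_class_def)
  define g where "g x = x\<^sup>2 * indicator {x. l < \<bar>x\<bar>} x" for x :: real
  have gm: "g \<in> borel_measurable P" unfolding mb g_def by measurable
  have gint: "integrable P g"
  proof (rule Bochner_Integration.integrable_bound[OF intx2 gm])
    show "AE x in P. norm (g x) \<le> norm (x\<^sup>2)" by (auto simp: g_def indicator_def)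
  qed
  have mm: "(\<lambda>x. x\<^sup>2 - min (x\<^sup>2) (l\<^sup>2)) \<in> borel_measurable P" unfolding mb by measurable
  have int1: "integrable P (\<lambda>x. x\<^sup>2 - min (x\<^sup>2) (l\<^sup>2))"
  proof (rule Bochner_Integration.integrable_bound[OF intx2 mm])
    show "AE x in P. norm (x\<^sup>2 - min (x\<^sup>2) (l\<^sup>2)) \<le> norm (x\<^sup>2)" by auto
  qed
  have "(\<integral>x. x\<^sup>2 - min (x\<^sup>2) (l\<^sup>2) \<partial>P) \<le> (\<integral>x. g x \<partial>P)"
  proof (rule integral_mono[OF int1 gint])
    fix x :: real
    show "x\<^sup>2 - min (x\<^sup>2) (l\<^sup>2) \<le> g x"
    proof (cases "l < \<bar>x\<bar>")
      case True then show ?thesis by (simp add: g_def)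
    next
      case False
      then have "\<bar>x\<bar> \<le> \<bar>l\<bar>" using l by simp
      then have "x\<^sup>2 \<le> l\<^sup>2" by (simp add: abs_le_square_iff)
      then show ?thesis using False by (simp add: g_def)
    qed
  qed
  also have "\<dots> \<le> 1/64"
  proof -
    have "ennreal (\<integral>x. g x \<partial>P) = (\<integral>\<^sup>+x. ennreal (g x) \<partial>P)"
      by (rule nn_integral_eq_integral[OF gint, symmetric]) (auto simp: g_def)
    also have "\<dots> = (\<integral>\<^sup>+x. ennreal (\<bar>x\<bar>^2 * indicator {x. l < \<bar>x\<bar>} x) \<partial>P)"
      unfolding g_def by simp
    also have "\<dots> \<le> ennreal (2^2 * l powr (real 2 - a) * \<tau> powr a / (1 - 2 powr (real 2 - a)))"
      by (rule tail_moment[OF nc _ l tau]) (use a in simp)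
    also have "\<dots> \<le> ennreal (1/64)" using small by (rule ennreal_leI)
    finally show ?thesis by (simp add: ennreal_le_iff)
  qed
  finally show ?thesis .
qed

lemma m4_bound:
  assumes nc: "noise_class a \<tau> P" and a: "a > 4" and tau: "\<tau> > 0"
  shows "integrable P (\<lambda>x. x^4) \<and>
    (\<integral>x. x^4 \<partial>P) \<le> 16 + 2^4 * 2 powr (real 4 - a) * \<tau> powr a / (1 - 2 powr (real 4 - a))"
proof -
  define T where "T = 2^4 * 2 powr (real 4 - a) * \<tau> powr a / (1 - 2 powr (real 4 - a))"
  have r1: "2 powr (real 4 - a) < 1" using a by (intro powr_less_one) auto
  have T0: "T \<ge> 0" unfolding T_def using r1 by (intro divide_nonneg_nonneg mult_nonneg_nonneg) auto
  have sP: "sets P = sets borel" using nc by (simp add: noise_class_def)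
  have PP: "prob_space P" using nc by (simp add: noise_class_def)
  have mb: "measurable P N = measurable borel N" for N by (rule measurable_cong_sets) (auto simp: sP)
  have pw: "ennreal (x^4) \<le> ennreal 16 + ennreal (\<bar>x\<bar>^4 * indicator {x. 2 < \<bar>x\<bar>} x)" for x :: real
  proof (cases "2 < \<bar>x\<bar>")
    case True
    then show ?thesis by (simp add: power_abs[symmetric] pos2)
  next
    case False
    then have "\<bar>x\<bar>^4 \<le> 2^4" by (intro power_mono) auto
    then have "x^4 \<le> 16" by (simp add: power_abs[symmetric] pos2)
    then have "ennreal (x^4) \<le> ennreal 16" by (rule ennreal_leI)
    then show ?thesis using False by simp
  qed
  have "(\<integral>\<^sup>+x. ennreal (x^4) \<partial>P) \<le> (\<integral>\<^sup>+x. ennreal 16 + ennreal (\<bar>x\<bar>^4 * indicator {x. 2 < \<bar>x\<bar>} x) \<partial>P)"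
    by (rule nn_integral_mono) (rule pw)
  also have "\<dots> = (\<integral>\<^sup>+x. ennreal 16 \<partial>P) + (\<integral>\<^sup>+x. ennreal (\<bar>x\<bar>^4 * indicator {x. 2 < \<bar>x\<bar>} x) \<partial>P)"
    by (rule nn_integral_add) (unfold mb, measurable)
  also have "(\<integral>\<^sup>+x. ennreal 16 \<partial>P) = ennreal 16"
    using PP by (simp add: prob_space.emeasure_space_1)
  also have "(\<integral>\<^sup>+x. ennreal (\<bar>x\<bar>^4 * indicator {x. 2 < \<bar>x\<bar>} x) \<partial>P) \<le> ennreal T"
    unfolding T_def by (rule tail_moment[OF nc _ _ tau]) (use a in simp_all)
  finally have nb: "(\<integral>\<^sup>+x. ennreal (x^4) \<partial>P) \<le> ennreal (16 + T)"
    using T0 by (simp add: ennreal_plus[symmetric] add_left_mono)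
  have int: "integrable P (\<lambda>x. x^4)"
  proof (rule integrableI_bounded)
    show "(\<lambda>x. x^4) \<in> borel_measurable P" unfolding mb by measurable
    have "(\<integral>\<^sup>+x. ennreal (norm (x^4)) \<partial>P) = (\<integral>\<^sup>+x. ennreal (x^4) \<partial>P)"
      by (simp add: zero_le_even_power)
    also have "\<dots> \<le> ennreal (16 + T)" by (rule nb)
    also have "\<dots> < \<infinity>" by simp
    finally show "(\<integral>\<^sup>+x. ennreal (norm (x^4)) \<partial>P) < \<infinity>" .
  qed
  have "ennreal (\<integral>x. x^4 \<partial>P) = (\<integral>\<^sup>+x. ennreal (x^4) \<partial>P)"
    by (rule nn_integral_eq_integral[OF int, symmetric]) (auto simp: zero_le_even_power)
  with nb have "ennreal (\<integral>x. x^4 \<partial>P) \<le> ennreal (16 + T)" by simp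
  then have "(\<integral>x. x^4 \<partial>P) \<le> 16 + T" using T0 by (subst (asm) ennreal_le_iff) auto
  then show ?thesis using int unfolding T_def by simp
qed



theorem proposition1:
  fixes a \<tau> :: real
  assumes "\<tau> > 0" and "a > 2"
  shows "\<exists>\<gamma> c C :: real. 0 < \<gamma> \<and> \<gamma> \<le> 1/2 \<and> c > 0 \<and> C > 0 \<and>
    (\<forall>(s::nat) (d::nat) (m::nat) B. m = nat \<lfloor>\<gamma> * real d\<rfloor> \<longrightarrow> mom_partition d m B \<longrightarrow>
       1 \<le> s \<longrightarrow> real s < real m / 4 \<longrightarrow>
       (\<forall>P \<sigma> \<theta>. noise_class a \<tau> P \<longrightarrow> \<sigma> > 0 \<longrightarrow> sparse d s \<theta> \<longrightarrow>
          (let M = PiM {0..<d} (\<lambda>_. P);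
               est = (\<lambda>\<xi>. mom_est B m (\<lambda>j. \<theta> j + \<sigma> * \<xi> j)) in
           measure M {\<xi> \<in> space M. 1/2 \<le> est \<xi> / \<sigma>\<^sup>2 \<and> est \<xi> / \<sigma>\<^sup>2 \<le> 3/2}
              \<ge> 1 - exp (- c * real d) \<and>
           (\<integral>\<^sup>+ \<xi>. ennreal \<bar>est \<xi> - \<sigma>\<^sup>2\<bar> \<partial>M) \<le> ennreal (C * \<sigma>\<^sup>2) \<and>
           (a > 4 \<longrightarrow> (\<integral>\<^sup>+ \<xi>. ennreal ((est \<xi> - \<sigma>\<^sup>2)\<^sup>2) \<partial>M) \<le> ennreal (C * \<sigma>^4)))))"
proof -
  have tau: "\<tau> > 0" and a2: "a > 2" using assms by auto
  define K2 where "K2 = 2^2 * \<tau> powr a / (1 - 2 powr (real 2 - a))"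
  have lim: "((\<lambda>l. K2 * l powr (real 2 - a)) \<longlongrightarrow> K2 * 0) at_top"
    by (intro tendsto_mult tendsto_const tendsto_neg_powr filterlim_ident) (use a2 in simp)
  have lim': "((\<lambda>l. K2 * l powr (real 2 - a)) \<longlongrightarrow> 0) at_top" using lim by simp
  have "eventually (\<lambda>l. K2 * l powr (real 2 - a) < 1/64) at_top"
    by (rule order_tendstoD(2)[OF lim']) simp
  moreover have "eventually (\<lambda>l::real. l \<ge> 2) at_top" by (rule eventually_ge_at_top)
  ultimately have "eventually (\<lambda>l. K2 * l powr (real 2 - a) < 1/64 \<and> l \<ge> 2) at_top"
    by (rule eventually_conj)
  then obtain L :: real where L: "\<forall>l\<ge>L. K2 * l powr (real 2 - a) < 1/64 \<and> l \<ge> 2"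
    unfolding eventually_at_top_linorder by blast
  then obtain l :: real where l: "K2 * l powr (real 2 - a) < 1/64" "l \<ge> 2" by blast
  have small: "2^2 * l powr (real 2 - a) * \<tau> powr a / (1 - 2 powr (real 2 - a)) \<le> 1/64"
    using l(1) unfolding K2_def by (simp add: field_simps)
  define N :: nat where "N = nat \<lceil>64 * l^4\<rceil> + 2"
  have N2: "N \<ge> 2" unfolding N_def by simp
  have NK: "real N \<ge> 64 * l^4" unfolding N_def by linarith
  define \<gamma> where "\<gamma> = 1 / real N"
  define c where "c = 1 / (64 * real N)"
  define K4 where "K4 = 16 + 2^4 * 2 powr (real 4 - a) * \<tau> powr a / (1 - 2 powr (real 4 - a))"
  define C where "C = max 5 (16 * K4 + 1)"
  show ?thesis
  proof (rule exI[of _ \<gamma>], rule exI[of _ c], rule exI[of _ C], intro conjI allI impI)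
    show "0 < \<gamma>" unfolding \<gamma>_def using N2 by simp
    show "\<gamma> \<le> 1/2" unfolding \<gamma>_def using N2 by (simp add: field_simps)
    show "c > 0" unfolding c_def using N2 by simp
    show "C > 0" unfolding C_def by simp
  next
    fix s d m :: nat and B :: "nat \<Rightarrow> nat set" and P :: "real measure" and \<sigma> :: real and \<theta> :: "nat \<Rightarrow> real"
    assume mdef: "m = nat \<lfloor>\<gamma> * real d\<rfloor>" and part: "mom_partition d m B" and s1: "1 \<le> s"
      and sm: "real s < real m / 4" and nc: "noise_class a \<tau> P" and sig: "\<sigma> > 0" and sp: "sparse d s \<theta>"
    have meq: "m = d div N"
    proof -
      have "\<gamma> * real d = real d / real N" unfolding \<gamma>_def by simp
      then show ?thesis using mdef by (simp add: floor_divide_of_nat_eq)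
    qed
    have sm4: "4 * s < m" using sm by linarith
    have m0: "m > 0" using sm4 by simp
    have N0: "N > 0" using N2 by simp
    have mN: "m * N \<le> d" unfolding meq by (simp add: div_times_less_eq_dividend)
    have d0: "d > 0" using mN m0 N0 by (metis gr0I mult_pos_pos not_le)
    have dm: "N \<le> d div m" using mN m0 by (simp add: less_eq_div_iff_mult_less_eq mult.commute)
    have kbig: "real (d div m) \<ge> 64 * l^4" using dm NK by (meson of_nat_le_iff order_trans)
    have d2: "real d \<le> 2 * real N * real m"
    proof -
      have "d = m * N + d mod N" unfolding meq by simp
      moreover have "d mod N < N" using N0 by simp
      moreover have "N \<le> m * N" using m0 by simp
      ultimately have "d \<le> 2 * (m * N)" by linarith
      then have "real d \<le> real (2 * (m * N))" by (simp only: of_nat_le_iff)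
      then show ?thesis by (simp add: algebra_simps)
    qed
    have expb: "exp (- real m / 32) \<le> exp (- c * real d)"
    proof -
      have "c * real d \<le> real m / 32" unfolding c_def using d2 N0 by (simp add: field_simps)
      then show ?thesis by simp
    qed
    interpret nset a \<tau> P d by unfold_locales (rule nc)
    have Bne: "B i \<noteq> {}" if "i < m" for i
    proof
      assume "B i = {}"
      then show False using part_facts(2)[OF part that] dm N2 by simp
    qed
    have eps: "(\<integral>x. x\<^sup>2 - min (x\<^sup>2) (l\<^sup>2) \<partial>P) \<le> 1/64"
      by (rule eps_bound[OF nc a2 tau l(2) small])
    have P1: "MM.prob {\<xi> \<in> space MM. 1/2 \<le> mom_est B m (\<lambda>j. \<theta> j + \<sigma> * \<xi> j) / \<sigma>\<^sup>2 \<and>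
            mom_est B m (\<lambda>j. \<theta> j + \<sigma> * \<xi> j) / \<sigma>\<^sup>2 \<le> 3/2} \<ge> 1 - exp (- real m / 32)"
      by (rule prob_part[OF d0 part sp sm4 sig l(2) eps kbig])
    have P2: "(\<integral>\<^sup>+ \<xi>. ennreal \<bar>mom_est B m (\<lambda>j. \<theta> j + \<sigma> * \<xi> j) - \<sigma>\<^sup>2\<bar> \<partial>MM) \<le> ennreal (C * \<sigma>\<^sup>2)"
    proof -
      have "(\<integral>\<^sup>+ \<xi>. ennreal \<bar>mom_est B m (\<lambda>j. \<theta> j + \<sigma> * \<xi> j) - \<sigma>\<^sup>2\<bar> \<partial>MM) \<le> ennreal (5 * \<sigma>\<^sup>2)"
        by (rule exp_part(1)[OF d0 part sp sm4 sig Bne])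
      also have "\<dots> \<le> ennreal (C * \<sigma>\<^sup>2)" unfolding C_def
        by (intro ennreal_leI mult_right_mono) auto
      finally show ?thesis .
    qed
    have P3: "(\<integral>\<^sup>+ \<xi>. ennreal ((mom_est B m (\<lambda>j. \<theta> j + \<sigma> * \<xi> j) - \<sigma>\<^sup>2)\<^sup>2) \<partial>MM) \<le> ennreal (C * \<sigma>^4)"
      if a4: "a > 4"
    proof -
      have m4: "integrable P (\<lambda>x. x^4)" "(\<integral>x. x^4 \<partial>P) \<le> K4"
        using m4_bound[OF nc a4 tau] unfolding K4_def by auto
      have "(\<integral>\<^sup>+ \<xi>. ennreal ((mom_est B m (\<lambda>j. \<theta> j + \<sigma> * \<xi> j) - \<sigma>\<^sup>2)\<^sup>2) \<partial>MM) \<le> ennreal ((16 * K4 + 1) * \<sigma>^4)"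
        by (rule exp_part(2)[OF d0 part sp sm4 sig Bne m4])
      also have "\<dots> \<le> ennreal (C * \<sigma>^4)" unfolding C_def
        by (intro ennreal_leI mult_right_mono) auto
      finally show ?thesis .
    qed
    show "let M = PiM {0..<d} (\<lambda>_. P);
               est = (\<lambda>\<xi>. mom_est B m (\<lambda>j. \<theta> j + \<sigma> * \<xi> j)) in
           measure M {\<xi> \<in> space M. 1/2 \<le> est \<xi> / \<sigma>\<^sup>2 \<and> est \<xi> / \<sigma>\<^sup>2 \<le> 3/2}
              \<ge> 1 - exp (- c * real d) \<and>
           (\<integral>\<^sup>+ \<xi>. ennreal \<bar>est \<xi> - \<sigma>\<^sup>2\<bar> \<partial>M) \<le> ennreal (C * \<sigma>\<^sup>2) \<and>
           (a > 4 \<longrightarrow> (\<integral>\<^sup>+ \<xi>. ennreal ((est \<xi> - \<sigma>\<^sup>2)\<^sup>2) \<partial>M) \<le> ennreal (C * \<sigma>^4))"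
    proof -
      have P1': "MM.prob {\<xi> \<in> space MM. 1/2 \<le> mom_est B m (\<lambda>j. \<theta> j + \<sigma> * \<xi> j) / \<sigma>\<^sup>2 \<and>
            mom_est B m (\<lambda>j. \<theta> j + \<sigma> * \<xi> j) / \<sigma>\<^sup>2 \<le> 3/2} \<ge> 1 - exp (- c * real d)"
        using P1 expb by linarith
      show ?thesis unfolding Let_def using P1' P2 P3 by blast
    qed
  qed
qed


end
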